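(* Let $\mathcal{X},\mathcal{Y},\mathcal{U},\mathcal{Z}$ be finite sets, let $(X,Y)\in\mathcal{X}\times\mathcal{Y}$ have a joint distribution $P_{X,Y}$ of full support on $\mathcal{X}\times\mathcal{Y}$, and let $f:\mathcal{X}\times\mathcal{Y}\to\mathcal{U}$, $g:\mathcal{Y}\to\mathcal{Z}$ be deterministic. Define $j:\mathcal{X}\times\mathcal{Z}\to\mathcal{U}^*$ by $j(x,z)=(f(x,y'))_{y'\in g^{-1}(z)}$ (the word listing the values $f(x,y')$ over $y'\in g^{-1}(z)$ in a fixed order). Then the optimal zero-error rate is $$R^*=H\big(j(X,g(Y))\,\big|\,g(Y)\big).$$
   Context: $\mathcal{U}^*$ denotes the set of finite words over $\mathcal{U}$, and $g^{-1}(z)=\{y\in\mathcal{Y}:g(y)=z\}$. Setting: $(X^n,Y^n)$ denotes $n$ i.i.d. copies of $(X,Y)$. An encoder observes $X^n$ and $(g(Y_t))_{t\le n}$; a decoder observes $Y^n$ and must recover $(f(X_t,Y_t))_{t\le n}$. An $(n,R_n)$-zero-error source code is a pair $\phi_e:\mathcal{X}^n\times\mathcal{Z}^n\to\{0,1\}^*$, $\phi_d:\mathcal{Y}^n\times\{0,1\}^*\to\mathcal{U}^n$ such that $\phi_e(\mathcal{X}^n\times\mathcal{Z}^n)$ is prefix-free, $R_n=\frac1n\mathbb{E}[l(\phi_e(X^n,(g(Y_t))_{t\le n}))]$ ($l$ = length of a binary word), and for all $(x^n,y^n)\in\operatorname{supp}P^n_{X,Y}$, $\phi_d(y^n,\phi_e(x^n,(g(y_t))_{t\le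 n}))=(f(x_t,y_t))_{t\le n}$. A rate $R$ is achievable if some sequence of $(n,R_n)$-zero-error codes has $\lim_n R_n=R$; $R^*$ is the infimum of achievable rates. *)

theory Defs
  imports Complex_Main "HOL-Library.Sublist"
begin

definition prod_pmf_n :: "('x \<Rightarrow> 'y \<Rightarrow> real) \<Rightarrow> 'x list \<Rightarrow> 'y list \<Rightarrow> real" where
  "prod_pmf_n P xs ys = (\<Prod>t<length xs. P (xs ! t) (ys ! t))"

definition prefix_free :: "bool list set \<Rightarrow> bool" where
  "prefix_free C \<longleftrightarrow> (\<forall>a\<in>C. \<forall>b\<in>C. a \<noteq> b \<longrightarrow> \<not> prefix a b)"

text \<open>Since P has full support, the
correctness condition is required for all sequences of length n.\<close>
definition zero_error_code ::
  "('x \<Rightarrow> 'y \<Rightarrow> 'u) \<Rightarrow> ('y \<Rightarrow> 'z) \<Rightarrow> nat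
   \<Rightarrow> ('x list \<Rightarrow> 'z list \<Rightarrow> bool list) \<Rightarrow> ('y list \<Rightarrow> bool list \<Rightarrow> 'u list) \<Rightarrow> bool" where
  "zero_error_code f g n enc dec \<longleftrightarrow>
     prefix_free {enc xs zs | xs zs. length xs = n \<and> length zs = n} \<and>
     (\<forall>xs ys. length xs = n \<longrightarrow> length ys = n \<longrightarrow>
        dec ys (enc xs (map g ys)) = map2 f xs ys)"

definition code_rate ::
  "('x \<Rightarrow> 'y \<Rightarrow> real) \<Rightarrow> ('y \<Rightarrow> 'z) \<Rightarrow> nat \<Rightarrow> ('x list \<Rightarrow> 'z list \<Rightarrow> bool list) \<Rightarrow> real" where
  "code_rate P g n enc =
     (1 / real n) * (\<Sum>(xs, ys) \<in> {xs. length xs = n} \<times> {ys. length ys = n}.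
        prod_pmf_n P xs ys * real (length (enc xs (map g ys))))"

definition achievable_rate ::
  "('x \<Rightarrow> 'y \<Rightarrow> real) \<Rightarrow> ('x \<Rightarrow> 'y \<Rightarrow> 'u) \<Rightarrow> ('y \<Rightarrow> 'z) \<Rightarrow> real \<Rightarrow> bool" where
  "achievable_rate P f g R \<longleftrightarrow>
     (\<exists>enc dec. (\<forall>n\<ge>1. zero_error_code f g n (enc n) (dec n)) \<and>
        (\<lambda>n. code_rate P g n (enc n)) \<longlonglongrightarrow> R)"

definition optimal_rate ::
  "('x \<Rightarrow> 'y \<Rightarrow> real) \<Rightarrow> ('x \<Rightarrow> 'y \<Rightarrow> 'u) \<Rightarrow> ('y \<Rightarrow> 'z) \<Rightarrow> real" where
  "optimal_rate P f g = Inf {R. achievable_rate P f g R}"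

text \<open>j(x,z) = (f(x,y'))_{y' in g^{-1}(z)}, listed in the fixed order given by
an enumeration ys0 of the finite set Y.\<close>
definition jfun :: "'y list \<Rightarrow> ('x \<Rightarrow> 'y \<Rightarrow> 'u) \<Rightarrow> ('y \<Rightarrow> 'z) \<Rightarrow> 'x \<Rightarrow> 'z \<Rightarrow> 'u list" where
  "jfun ys0 f g x z = map (f x) (filter (\<lambda>y'. g y' = z) ys0)"

definition cond_entropy ::
  "('x::finite \<Rightarrow> 'y::finite \<Rightarrow> real) \<Rightarrow> ('x \<Rightarrow> 'y \<Rightarrow> 'a) \<Rightarrow> ('x \<Rightarrow> 'y \<Rightarrow> 'b) \<Rightarrow> real" where
  "cond_entropy P A B =
     (let pAB = (\<lambda>a b. \<Sum>(x, y) \<in> {(x, y). A x y = a \<and> B x y = b}. P x y);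
          pB = (\<lambda>b. \<Sum>(x, y) \<in> {(x, y). B x y = b}. P x y)
      in - (\<Sum>(a, b) \<in> (\<lambda>(x, y). (A x y, B x y)) ` UNIV.
              pAB a b * log 2 (pAB a b / pB b)))"

end

theory Submission
  imports Defs "HOL-Library.Countable" "HOL-Library.Product_Lexorder"
begin


definition Ln :: "nat \<Rightarrow> 'a list set" where "Ln n = {xs. length xs = n}"

lemma finite_Ln[simp]: "finite (Ln n :: 'a::finite list set)"
proof -
  have "Ln n = {xs::'a list. set xs \<subseteq> UNIV \<and> length xs = n}" by (simp add: Ln_def)
  then show ?thesis using finite_lists_length_eq[of "UNIV::'a set" n] by simp
qed

lemma card_Ln: "card (Ln n :: 'a::finite list set) = card (UNIV::'a set) ^ n"
proof -
  have "Ln n = {xs::'a list. set xs \<subseteq> UNIV \<and> length xs = n}" by (simp add: Ln_def)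
  then show ?thesis using card_lists_length_eq[of "UNIV::'a set" n] by simp
qed

lemma Ln_Suc: "Ln (Suc n) = (\<lambda>(x,xs). x # xs) ` (UNIV \<times> Ln n)"
  unfolding Ln_def by (auto simp: length_Suc_conv image_iff)

lemma sum_Ln_Suc1:
  "(\<Sum>xs\<in>Ln (Suc n). F xs) = (\<Sum>x\<in>(UNIV::'a::finite set). \<Sum>xs\<in>Ln n. F (x # xs))"
proof -
  have inj: "inj_on (\<lambda>(x::'a,xs). x # xs) (UNIV \<times> Ln n)" by (auto simp: inj_on_def)
  have "(\<Sum>xs\<in>Ln (Suc n). F xs) = (\<Sum>p\<in>UNIV \<times> Ln n. F (case p of (x,xs) \<Rightarrow> x # xs))"
    unfolding Ln_Suc by (subst sum.reindex[OF inj]) (simp add: comp_def)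
  also have "\<dots> = (\<Sum>x\<in>UNIV. \<Sum>xs\<in>Ln n. F (x # xs))"
    by (simp add: sum.cartesian_product prod.case_distrib)
  finally show ?thesis .
qed

lemma sum_Ln_Suc2:
  "(\<Sum>(xs,ys)\<in>Ln (Suc n) \<times> Ln (Suc n). F xs ys) =
   (\<Sum>x\<in>(UNIV::'a::finite set). \<Sum>y\<in>(UNIV::'b::finite set). \<Sum>(xs,ys)\<in>Ln n \<times> Ln n. F (x#xs) (y#ys))"
proof -
  have "(\<Sum>(xs,ys)\<in>Ln (Suc n) \<times> Ln (Suc n). F xs ys) = (\<Sum>xs\<in>Ln (Suc n). \<Sum>ys\<in>Ln (Suc n). F xs ys)"
    by (simp add: sum.cartesian_product)
  also have "\<dots> = (\<Sum>x\<in>(UNIV::'a set). \<Sum>xs\<in>Ln n. \<Sum>y\<in>(UNIV::'b set). \<Sum>ys\<in>Ln n. F (x#xs) (y#ys))"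
    by (simp add: sum_Ln_Suc1)
  also have "\<dots> = (\<Sum>x\<in>(UNIV::'a set). \<Sum>y\<in>(UNIV::'b set). \<Sum>xs\<in>Ln n. \<Sum>ys\<in>Ln n. F (x#xs) (y#ys))"
    by (intro sum.cong refl) (rule sum.swap)
  also have "\<dots> = (\<Sum>x\<in>(UNIV::'a set). \<Sum>y\<in>(UNIV::'b set). \<Sum>(xs,ys)\<in>Ln n \<times> Ln n. F (x#xs) (y#ys))"
    by (simp add: sum.cartesian_product)
  finally show ?thesis .
qed

lemma Pn_Cons: "prod_pmf_n P (x#xs) (y#ys) = P x y * prod_pmf_n P xs ys"
  unfolding prod_pmf_n_def length_Cons prod.lessThan_Suc_shift by simp

lemma Pn_Nil: "prod_pmf_n P [] ys = 1"
  unfolding prod_pmf_n_def by simp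

lemma Ln0: "Ln 0 = {[]}" by (auto simp: Ln_def)

lemma L2:
  fixes P :: "'a::finite \<Rightarrow> 'b::finite \<Rightarrow> real"
  shows "(\<Sum>(xs,ys)\<in>Ln n \<times> Ln n. prod_pmf_n P xs ys * (if \<forall>t<n. R t (xs!t) (ys!t) then 1 else 0))
    = (\<Prod>t<n. \<Sum>x\<in>UNIV. \<Sum>y\<in>UNIV. P x y * (if R t x y then 1 else 0))"
proof (induction n arbitrary: R)
  case 0
  then show ?case by (simp add: Ln0 Pn_Nil)
next
  case (Suc n)
  have e: "(\<forall>t<Suc n. R t ((x#xs)!t) ((y#ys)!t)) \<longleftrightarrow> R 0 x y \<and> (\<forall>t<n. R (Suc t) (xs!t) (ys!t))"
    for x y xs ys by (auto simp: less_Suc_eq_0_disj)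
  have pt: "(\<Sum>(xs,ys)\<in>Ln n \<times> Ln n. P x y * prod_pmf_n P xs ys * (if R 0 x y \<and> (\<forall>t<n. R (Suc t) (xs!t) (ys!t)) then 1 else 0))
     = P x y * (if R 0 x y then 1 else 0) * (\<Sum>(xs,ys)\<in>Ln n \<times> Ln n. prod_pmf_n P xs ys * (if \<forall>t<n. R (Suc t) (xs!t) (ys!t) then 1 else 0))" for x y
    by (cases "R 0 x y") (simp_all add: sum_distrib_left case_prod_beta mult.assoc)
  have "(\<Sum>(xs,ys)\<in>Ln (Suc n) \<times> Ln (Suc n). prod_pmf_n P xs ys * (if \<forall>t<Suc n. R t (xs!t) (ys!t) then 1 else 0))
    = (\<Sum>x\<in>UNIV. \<Sum>y\<in>UNIV. P x y * (if R 0 x y then 1 else 0) *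
        (\<Sum>(xs,ys)\<in>Ln n \<times> Ln n. prod_pmf_n P xs ys * (if \<forall>t<n. R (Suc t) (xs!t) (ys!t) then 1 else 0)))"
    unfolding sum_Ln_Suc2 Pn_Cons e pt[symmetric] by (simp only: mult.assoc)
  also have "\<dots> = (\<Sum>x\<in>UNIV. \<Sum>y\<in>UNIV. P x y * (if R 0 x y then 1 else 0)) *
        (\<Prod>t<n. \<Sum>x\<in>UNIV. \<Sum>y\<in>UNIV. P x y * (if R (Suc t) x y then 1 else 0))"
    unfolding Suc.IH[of "\<lambda>t. R (Suc t)"] by (simp add: sum_distrib_right)
  also have "\<dots> = (\<Prod>t<Suc n. \<Sum>x\<in>UNIV. \<Sum>y\<in>UNIV. P x y * (if R t x y then 1 else 0))"
    unfolding prod.lessThan_Suc_shift by simp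
  finally show ?case .
qed

lemma aux_sum: "(\<Sum>x\<in>A. \<Sum>y\<in>B. P x y * (h x y + c)) = (\<Sum>x\<in>A. \<Sum>y\<in>B. P x y * h x y) + c * (\<Sum>x\<in>A. \<Sum>y\<in>B. (P x y::real))"
  by (simp add: distrib_left sum.distrib sum_distrib_left mult_ac)

lemma L1:
  fixes P :: "'a::finite \<Rightarrow> 'b::finite \<Rightarrow> real"
  assumes one: "(\<Sum>x\<in>UNIV. \<Sum>y\<in>UNIV. P x y) = 1"
  shows "(\<Sum>(xs,ys)\<in>Ln n \<times> Ln n. prod_pmf_n P xs ys * (\<Sum>t<n. h (xs!t) (ys!t)))
    = real n * (\<Sum>x\<in>UNIV. \<Sum>y\<in>UNIV. P x y * h x y)"
proof (induction n)
  case 0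
  then show ?case by (simp add: Ln0 Pn_Nil)
next
  case (Suc n)
  have tot: "(\<Sum>(xs,ys)\<in>Ln n \<times> Ln n. prod_pmf_n P xs ys) = 1"
    using L2[where n=n and P=P and R="\<lambda>_ _ _. True"] one by simp
  have pt: "(\<Sum>(xs,ys)\<in>Ln n \<times> Ln n. P x y * prod_pmf_n P xs ys * (\<Sum>t<Suc n. h ((x#xs)!t) ((y#ys)!t)))
     = P x y * (h x y * (\<Sum>(xs,ys)\<in>Ln n \<times> Ln n. prod_pmf_n P xs ys)
         + (\<Sum>(xs,ys)\<in>Ln n \<times> Ln n. prod_pmf_n P xs ys * (\<Sum>t<n. h (xs!t) (ys!t))))" for x y
  proof -
    have "(\<Sum>(xs,ys)\<in>Ln n \<times> Ln n. P x y * prod_pmf_n P xs ys * (\<Sum>t<Suc n. h ((x#xs)!t) ((y#ys)!t)))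
      = (\<Sum>(xs,ys)\<in>Ln n \<times> Ln n. P x y * (h x y * prod_pmf_n P xs ys) + P x y * (prod_pmf_n P xs ys * (\<Sum>t<n. h (xs!t) (ys!t))))"
      unfolding sum.lessThan_Suc_shift nth_Cons_0 nth_Cons_Suc by (intro sum.cong refl) (simp add: split_beta distrib_left mult_ac)
    also have "\<dots> = P x y * (h x y * (\<Sum>(xs,ys)\<in>Ln n \<times> Ln n. prod_pmf_n P xs ys))
         + P x y * (\<Sum>(xs,ys)\<in>Ln n \<times> Ln n. prod_pmf_n P xs ys * (\<Sum>t<n. h (xs!t) (ys!t)))"
      by (simp add: sum.distrib sum_distrib_left case_prod_beta)
    finally show ?thesis by (simp add: distrib_left)
  qed
  have "(\<Sum>(xs,ys)\<in>Ln (Suc n) \<times> Ln (Suc n). prod_pmf_n P xs ys * (\<Sum>t<Suc n. h (xs!t) (ys!t)))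
     = (\<Sum>x\<in>UNIV. \<Sum>y\<in>UNIV. P x y * (h x y * (\<Sum>(xs,ys)\<in>Ln n \<times> Ln n. prod_pmf_n P xs ys)
         + (\<Sum>(xs,ys)\<in>Ln n \<times> Ln n. prod_pmf_n P xs ys * (\<Sum>t<n. h (xs!t) (ys!t)))))"
    unfolding sum_Ln_Suc2 Pn_Cons pt[symmetric] by (simp only: mult.assoc)
  also have "\<dots> = (\<Sum>x\<in>UNIV. \<Sum>y\<in>UNIV. P x y * h x y) + real n * (\<Sum>x\<in>UNIV. \<Sum>y\<in>UNIV. P x y * h x y) * (\<Sum>x\<in>UNIV. \<Sum>y\<in>UNIV. P x y)"
    unfolding tot Suc.IH mult_1_right aux_sum by simp
  also have "\<dots> = real (Suc n) * (\<Sum>x\<in>UNIV. \<Sum>y\<in>UNIV. P x y * h x y)"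
    using one by (simp add: algebra_simps)
  finally show ?case .
qed




lemma prefix_free_subset: "prefix_free C \<Longrightarrow> D \<subseteq> C \<Longrightarrow> prefix_free D"
  unfolding prefix_free_def by blast

lemma kraft_aux:
  "\<forall>C. finite C \<and> prefix_free C \<and> (\<forall>w\<in>C. length w \<le> N) \<longrightarrow> (\<Sum>w\<in>C. (1/2::real)^length w) \<le> 1"
proof (induction N)
  case 0
  show ?case
  proof (intro allI impI)
    fix C :: "bool list set" assume h: "finite C \<and> prefix_free C \<and> (\<forall>w\<in>C. length w \<le> 0)"
    then have "C \<subseteq> {[]}" by auto
    then have "C = {} \<or> C = {[]}" by blast
    then show "(\<Sum>w\<in>C. (1/2::real)^length w) \<le> 1" by auto
  qed
next
  case (Suc N)
  show ?case
  proof (intro allI impI)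
    fix C :: "bool list set" assume h: "finite C \<and> prefix_free C \<and> (\<forall>w\<in>C. length w \<le> Suc N)"
    show "(\<Sum>w\<in>C. (1/2::real)^length w) \<le> 1"
    proof (cases "[] \<in> C")
      case True
      have "C = {[]}"
      proof -
        have "w = []" if "w \<in> C" for w
          using h True that unfolding prefix_free_def by (metis Nil_prefix)
        then show ?thesis using True by blast
      qed
      then show ?thesis by simp
    next
      case False
      define C1 where "C1 = {w. True # w \<in> C}"
      define C0 where "C0 = {w. False # w \<in> C}"
      have CC: "C = Cons True ` C1 \<union> Cons False ` C0"
      proof
        show "C \<subseteq> Cons True ` C1 \<union> Cons False ` C0"
        proof
          fix w assume "w \<in> C"
          with False obtain b v where "w = b # v" by (cases w) auto
          then show "w \<in> Cons True ` C1 \<union> Cons False ` C0"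
            using \<open>w \<in> C\<close> unfolding C1_def C0_def by (cases b) auto
        qed
        show "Cons True ` C1 \<union> Cons False ` C0 \<subseteq> C" unfolding C1_def C0_def by auto
      qed
      have fin1: "finite C1" unfolding C1_def
        using finite_vimageI[of C "Cons True"] h by (simp add: vimage_def)
      have fin0: "finite C0" unfolding C0_def
        using finite_vimageI[of C "Cons False"] h by (simp add: vimage_def)
      have pfb: "prefix_free {w. b # w \<in> C}" for b
        unfolding prefix_free_def
      proof (intro ballI impI)
        fix u v assume "u \<in> {w. b # w \<in> C}" "v \<in> {w. b # w \<in> C}" "u \<noteq> v"
        then have "b#u \<in> C" "b#v \<in> C" "b#u \<noteq> b#v" by auto
        then have "\<not> prefix (b#u) (b#v)" using h unfolding prefix_free_def by blast
        then show "\<not> prefix u v" by simp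
      qed
      have pf1: "prefix_free C1" using pfb unfolding C1_def .
      have pf0: "prefix_free C0" using pfb unfolding C0_def .
      have l1: "\<forall>w\<in>C1. length w \<le> N" using h unfolding C1_def by fastforce
      have l0: "\<forall>w\<in>C0. length w \<le> N" using h unfolding C0_def by fastforce
      have S1: "(\<Sum>w\<in>C1. (1/2::real)^length w) \<le> 1" using Suc.IH fin1 pf1 l1 by blast
      have S0: "(\<Sum>w\<in>C0. (1/2::real)^length w) \<le> 1" using Suc.IH fin0 pf0 l0 by blast
      have "(\<Sum>w\<in>C. (1/2::real)^length w) = (\<Sum>w\<in>Cons True ` C1. (1/2::real)^length w) + (\<Sum>w\<in>Cons False ` C0. (1/2::real)^length w)"
        unfolding CC by (rule sum.union_disjoint) (use fin1 fin0 in auto)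
      also have "\<dots> = (\<Sum>w\<in>C1. (1/2::real)^length w) / 2 + (\<Sum>w\<in>C0. (1/2::real)^length w) / 2"
        by (simp add: sum.reindex sum_divide_distrib)
      also have "\<dots> \<le> 1" using S1 S0 by simp
      finally show ?thesis .
    qed
  qed
qed

lemma kraft:
  assumes "finite C" "prefix_free C"
  shows "(\<Sum>w\<in>C. (1/2::real)^length w) \<le> 1"
proof -
  have "\<forall>w\<in>C. length w \<le> Max (length ` C)" using assms(1) by simp
  then show ?thesis using kraft_aux assms by blast
qed

lemma kraft_class:
  fixes p :: "'a \<Rightarrow> real"
  assumes fin: "finite A" and pos: "\<And>a. a\<in>A \<Longrightarrow> p a > 0" and pf: "prefix_free (c ` A)"
    and sep: "\<And>a a'. a\<in>A \<Longrightarrow> a'\<in>A \<Longrightarrow> \<kappa> a \<noteq> \<kappa> a' \<Longrightarrow> c a \<noteq> c a'"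
  shows "(\<Sum>a\<in>A. p a * (1/2)^length (c a) / sum p {a'\<in>A. \<kappa> a' = \<kappa> a}) \<le> 1"
proof -
  define Q where "Q k = sum p {a'\<in>A. \<kappa> a' = k}" for k
  define rep where "rep k = (SOME a. a\<in>A \<and> \<kappa> a = k \<and> (\<forall>a'. a'\<in>A \<and> \<kappa> a' = k \<longrightarrow> length (c a) \<le> length (c a')))" for k
  have rep: "rep k \<in> A \<and> \<kappa> (rep k) = k \<and> (\<forall>a'. a'\<in>A \<and> \<kappa> a' = k \<longrightarrow> length (c (rep k)) \<le> length (c a'))"
    if "k \<in> \<kappa> ` A" for k
  proof -
    from that obtain a0 where "a0 \<in> A" "\<kappa> a0 = k" by blast
    then have "\<exists>a. (a\<in>A \<and> \<kappa> a = k) \<and> (\<forall>a'. (a'\<in>A \<and> \<kappa> a' = k) \<longrightarrow> length (c a) \<le> length (c a'))"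
      using ex_has_least_nat[of "\<lambda>a. a\<in>A \<and> \<kappa> a = k" a0 "\<lambda>a. length (c a)"] by blast
    then show ?thesis unfolding rep_def by (rule someI_ex[where P="\<lambda>a. a\<in>A \<and> \<kappa> a = k \<and> (\<forall>a'. a'\<in>A \<and> \<kappa> a' = k \<longrightarrow> length (c a) \<le> length (c a'))", OF exE]) auto
  qed
  have Qpos: "Q k > 0" if "k \<in> \<kappa> ` A" for k
  proof -
    from that obtain a0 where a0: "a0 \<in> A" "\<kappa> a0 = k" by blast
    have "p a0 \<le> Q k" unfolding Q_def using a0 fin pos
      by (intro member_le_sum) (auto intro: less_imp_le)
    then show ?thesis using pos[OF a0(1)] by simp
  qed
  have "(\<Sum>a\<in>A. p a * (1/2)^length (c a) / sum p {a'\<in>A. \<kappa> a' = \<kappa> a})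
      = (\<Sum>k\<in>\<kappa> ` A. \<Sum>a\<in>{a\<in>A. \<kappa> a = k}. p a * (1/2)^length (c a) / Q k)"
    unfolding Q_def by (subst sum.image_gen[OF fin, of _ \<kappa>]) (intro sum.cong refl, auto)
  also have "\<dots> \<le> (\<Sum>k\<in>\<kappa> ` A. (1/2::real)^length (c (rep k)))"
  proof (rule sum_mono)
    fix k assume k: "k \<in> \<kappa> ` A"
    have "(\<Sum>a\<in>{a\<in>A. \<kappa> a = k}. p a * (1/2)^length (c a) / Q k)
        \<le> (\<Sum>a\<in>{a\<in>A. \<kappa> a = k}. p a * (1/2::real)^length (c (rep k)) / Q k)"
    proof (rule sum_mono)
      fix a assume a: "a \<in> {a\<in>A. \<kappa> a = k}"
      then have "length (c (rep k)) \<le> length (c a)" using rep[OF k] by blast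
      then have "(1/2::real)^length (c a) \<le> (1/2)^length (c (rep k))"
        by (intro power_decreasing) auto
      then show "p a * (1/2)^length (c a) / Q k \<le> p a * (1/2::real)^length (c (rep k)) / Q k"
        using pos[of a] a Qpos[OF k] by (intro divide_right_mono mult_left_mono) auto
    qed
    also have "\<dots> = (1/2::real)^length (c (rep k))"
      using Qpos[OF k] unfolding Q_def
      by (simp add: sum_divide_distrib[symmetric] sum_distrib_right[symmetric])
    finally show "(\<Sum>a\<in>{a\<in>A. \<kappa> a = k}. p a * (1/2)^length (c a) / Q k) \<le> (1/2::real)^length (c (rep k))" .
  qed
  also have "\<dots> = (\<Sum>w\<in>(c \<circ> rep) ` (\<kappa> ` A). (1/2::real)^length w)"
  proof -
    have inj: "inj_on (c \<circ> rep) (\<kappa> ` A)"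
    proof (rule inj_onI)
      fix k1 k2 assume k: "k1 \<in> \<kappa> ` A" "k2 \<in> \<kappa> ` A" "(c \<circ> rep) k1 = (c \<circ> rep) k2"
      show "k1 = k2"
      proof (rule ccontr)
        assume "k1 \<noteq> k2"
        then have "\<kappa> (rep k1) \<noteq> \<kappa> (rep k2)" using rep[OF k(1)] rep[OF k(2)] by simp
        then have "c (rep k1) \<noteq> c (rep k2)" using sep rep[OF k(1)] rep[OF k(2)] by blast
        then show False using k(3) by simp
      qed
    qed
    show ?thesis using sum.reindex[OF inj, of "\<lambda>w. (1/2::real)^length w"] by (simp add: comp_def)
  qed
  also have "\<dots> \<le> 1"
  proof (rule kraft)
    show "finite ((c \<circ> rep) ` \<kappa> ` A)" using fin by simp
    have "(c \<circ> rep) ` \<kappa> ` A \<subseteq> c ` A" using rep by auto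
    then show "prefix_free ((c \<circ> rep) ` \<kappa> ` A)" using pf prefix_free_subset by blast
  qed
  finally show ?thesis .
qed

lemma log2_le: "(y::real) > 0 \<Longrightarrow> log 2 y \<le> (y - 1) / ln 2"
  using ln_le_minus_one[of y] by (simp add: log_def divide_right_mono)

lemma gibbs_cond:
  fixes p :: "'a \<Rightarrow> real" and c :: "'a \<Rightarrow> bool list"
  assumes fin: "finite A" and pos: "\<And>a. a\<in>A \<Longrightarrow> p a > 0" and pf: "prefix_free (c ` A)"
    and sep: "\<And>a a'. a\<in>A \<Longrightarrow> a'\<in>A \<Longrightarrow> \<beta> a = \<beta> a' \<Longrightarrow> \<kappa> a \<noteq> \<kappa> a' \<Longrightarrow> c a \<noteq> c a'"
  shows "(\<Sum>a\<in>A. p a * log 2 (sum p {a'\<in>A. \<beta> a' = \<beta> a} / sum p {a'\<in>A. \<beta> a' = \<beta> a \<and> \<kappa> a' = \<kappa> a}))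
     \<le> (\<Sum>a\<in>A. p a * real (length (c a)))"
proof -
  define T where "T a = sum p {a'\<in>A. \<beta> a' = \<beta> a}" for a
  define Q where "Q a = sum p {a'\<in>A. \<beta> a' = \<beta> a \<and> \<kappa> a' = \<kappa> a}" for a
  have Qpos: "Q a > 0" if "a \<in> A" for a
  proof -
    have "p a \<le> Q a" unfolding Q_def using that fin pos
      by (intro member_le_sum) (auto intro: less_imp_le)
    then show ?thesis using pos[OF that] by simp
  qed
  have Tpos: "T a > 0" if "a \<in> A" for a
  proof -
    have "p a \<le> T a" unfolding T_def using that fin pos
      by (intro member_le_sum) (auto intro: less_imp_le)
    then show ?thesis using pos[OF that] by simp
  qed
  have key: "(\<Sum>a\<in>A. p a * (T a * (1/2)^length (c a) / Q a)) \<le> (\<Sum>a\<in>A. p a)"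
  proof -
    have "(\<Sum>a\<in>A. p a * (T a * (1/2)^length (c a) / Q a))
       = (\<Sum>b\<in>\<beta> ` A. \<Sum>a\<in>{a\<in>A. \<beta> a = b}. p a * (T a * (1/2)^length (c a) / Q a))"
      by (rule sum.image_gen[OF fin, where g=\<beta>])
    also have "\<dots> \<le> (\<Sum>b\<in>\<beta> ` A. sum p {a\<in>A. \<beta> a = b})"
    proof (rule sum_mono)
      fix b assume b: "b \<in> \<beta> ` A"
      define Ab where "Ab = {a\<in>A. \<beta> a = b}"
      have finb: "finite Ab" using fin unfolding Ab_def by simp
      have Tb: "T a = sum p Ab" if "a \<in> Ab" for a using that unfolding T_def Ab_def
        by (intro sum.cong) auto
      have Qb: "Q a = sum p {a'\<in>Ab. \<kappa> a' = \<kappa> a}" if "a \<in> Ab" for a using that unfolding Q_def Ab_def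
        by (intro sum.cong) auto
      have kc: "(\<Sum>a\<in>Ab. p a * (1/2)^length (c a) / sum p {a'\<in>Ab. \<kappa> a' = \<kappa> a}) \<le> 1"
      proof (rule kraft_class[OF finb])
        show "\<And>a. a \<in> Ab \<Longrightarrow> 0 < p a" using pos unfolding Ab_def by auto
        show "prefix_free (c ` Ab)" by (rule prefix_free_subset[OF pf]) (auto simp: Ab_def)
        show "\<And>a a'. a \<in> Ab \<Longrightarrow> a' \<in> Ab \<Longrightarrow> \<kappa> a \<noteq> \<kappa> a' \<Longrightarrow> c a \<noteq> c a'"
          using sep unfolding Ab_def by auto
      qed
      have "(\<Sum>a\<in>Ab. p a * (T a * (1/2)^length (c a) / Q a))
         = sum p Ab * (\<Sum>a\<in>Ab. p a * (1/2)^length (c a) / sum p {a'\<in>Ab. \<kappa> a' = \<kappa> a})"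
        unfolding sum_distrib_left by (intro sum.cong refl) (simp add: Tb Qb)
      also have "\<dots> \<le> sum p Ab * 1"
        using kc pos by (intro mult_left_mono sum_nonneg) (auto simp: Ab_def less_imp_le)
      finally show "(\<Sum>a\<in>{a\<in>A. \<beta> a = b}. p a * (T a * (1/2)^length (c a) / Q a)) \<le> sum p {a\<in>A. \<beta> a = b}"
        unfolding Ab_def by simp
    qed
    also have "\<dots> = (\<Sum>a\<in>A. p a)"
      by (subst sum.image_gen[OF fin, of _ \<beta>]) simp
    finally show ?thesis .
  qed
  have pt: "p a * log 2 (T a / Q a) \<le> p a * real (length (c a)) + p a * (T a * (1/2)^length (c a) / Q a - 1) / ln 2"
    if a: "a \<in> A" for a
  proof -
    have y: "T a * (1/2)^length (c a) / Q a > 0" using Tpos[OF a] Qpos[OF a] by simp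
    have "log 2 (T a / Q a) = log 2 (T a * (1/2)^length (c a) / Q a) + real (length (c a))"
    proof -
      have e1: "T a * (1/2)^length (c a) / Q a = (T a / Q a) * (1/2)^length (c a)" by simp
      have "log 2 (T a * (1/2)^length (c a) / Q a) = log 2 (T a / Q a) + log 2 ((1/2)^length (c a))"
        unfolding e1 using Tpos[OF a] Qpos[OF a] by (intro log_mult_pos) auto
      also have "log 2 ((1/2::real)^length (c a)) = - real (length (c a))"
        by (simp add: log_nat_power log_recip)
      finally show ?thesis by simp
    qed
    also have "\<dots> \<le> (T a * (1/2)^length (c a) / Q a - 1) / ln 2 + real (length (c a))"
      using log2_le[OF y] by simp
    finally have "log 2 (T a / Q a) \<le> real (length (c a)) + (T a * (1/2)^length (c a) / Q a - 1) / ln 2" by simp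
    then have "p a * log 2 (T a / Q a) \<le> p a * (real (length (c a)) + (T a * (1/2)^length (c a) / Q a - 1) / ln 2)"
      using pos[OF a] by (intro mult_left_mono) auto
    then show ?thesis by (simp add: distrib_left)
  qed
  have "(\<Sum>a\<in>A. p a * log 2 (T a / Q a))
      \<le> (\<Sum>a\<in>A. p a * real (length (c a)) + p a * (T a * (1/2)^length (c a) / Q a - 1) / ln 2)"
    using pt by (rule sum_mono)
  also have "\<dots> = (\<Sum>a\<in>A. p a * real (length (c a))) + ((\<Sum>a\<in>A. p a * (T a * (1/2)^length (c a) / Q a)) - (\<Sum>a\<in>A. p a)) / ln 2"
    by (simp add: sum.distrib sum_divide_distrib sum_subtractf right_diff_distrib diff_divide_distrib)
  also have "\<dots> \<le> (\<Sum>a\<in>A. p a * real (length (c a)))"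
    using key by (simp add: divide_nonpos_pos)
  finally show ?thesis unfolding T_def Q_def .
qed




fun bin :: "nat \<Rightarrow> nat \<Rightarrow> bool list" where
  "bin 0 v = []"
| "bin (Suc k) v = odd v # bin k (v div 2)"

lemma length_bin[simp]: "length (bin k v) = k"
  by (induction k arbitrary: v) auto

lemma bin_inj: "v < 2^k \<Longrightarrow> v' < 2^k \<Longrightarrow> bin k v = bin k v' \<Longrightarrow> v = v'"
proof (induction k arbitrary: v v')
  case 0
  then show ?case by simp
next
  case (Suc k)
  have "v div 2 < 2^k" "v' div 2 < 2^k" using Suc.prems by auto
  moreover have "bin k (v div 2) = bin k (v' div 2)" "odd v = odd v'" using Suc.prems by auto
  ultimately have "v div 2 = v' div 2" "v mod 2 = v' mod 2" using Suc.IH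
    by (auto simp: odd_iff_mod_2_eq_one)
  then show ?case by (metis div_mult_mod_eq)
qed

definition bl :: "nat \<Rightarrow> nat" where "bl r = (LEAST k. r < 2^k)"

lemma bl_gt: "r < 2 ^ bl r"
  unfolding bl_def by (rule LeastI[of _ r]) (rule less_exp)

lemma bl_le: "r < 2^m \<Longrightarrow> bl r \<le> m"
  unfolding bl_def by (rule Least_le)

lemma bl_mono: "r \<le> r' \<Longrightarrow> bl r \<le> bl r'"
  using bl_le bl_gt le_less_trans by blast

lemma bl_log: assumes "1 \<le> r" shows "real (bl r) \<le> log 2 (real r) + 1"
proof -
  have "bl r \<noteq> 0" using bl_gt[of r] assms
    by (metis not_less_Least bl_def less_one not_le power_0 zero_less_iff_neq_zero) 
  then have "\<not> r < 2 ^ (bl r - 1)" unfolding bl_def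
    by (intro not_less_Least) (simp add: bl_def[symmetric])
  then have "(2::real) ^ (bl r - 1) \<le> real r"
    by (metis not_less of_nat_le_iff of_nat_numeral of_nat_power)
  then have "log 2 ((2::real) ^ (bl r - 1)) \<le> log 2 (real r)"
    using assms by (intro log_le_cancel_iff[THEN iffD2]) auto
  then have "real (bl r - 1) \<le> log 2 (real r)" using assms by (simp add: log_nat_power)
  then show ?thesis using \<open>bl r \<noteq> 0\<close> by linarith
qed

definition word :: "nat \<Rightarrow> nat \<Rightarrow> bool list" where
  "word w r = bin w (bl r) @ bin (bl r) r"

lemma length_word: "length (word w r) = w + bl r"
  unfolding word_def by simp

lemma word_inj:
  assumes "word w r = word w r'" "bl r < 2^w" "bl r' < 2^w"
  shows "r = r'"
proof -
  have "take w (word w r) = take w (word w r')" using assms(1) by simp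
  then have "bin w (bl r) = bin w (bl r')" unfolding word_def by simp
  then have e: "bl r = bl r'" using bin_inj assms(2,3) by blast
  have "drop w (word w r) = drop w (word w r')" using assms(1) by simp
  then have "bin (bl r) r = bin (bl r) r'" unfolding word_def e by simp
  then show ?thesis using bin_inj bl_gt[of r] bl_gt[of r'] e by metis
qed

lemma prefix_eq_len: "prefix a b \<Longrightarrow> length a = length b \<Longrightarrow> a = b"
  unfolding prefix_def by auto

lemma word_pf: "prefix_free {word w r | r. bl r < 2^w}"
  unfolding prefix_free_def
proof (intro ballI impI)
  fix a b assume a: "a \<in> {word w r | r. bl r < 2^w}" and b: "b \<in> {word w r | r. bl r < 2^w}" and ne: "a \<noteq> b"
  from a obtain r where r: "a = word w r" "bl r < 2^w" by blast
  from b obtain r' where r': "b = word w r'" "bl r' < 2^w" by blast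
  show "\<not> prefix a b"
  proof
    assume p: "prefix a b"
    then have tk: "take (length a) b = a" by (metis append_eq_conv_conj prefixE)
    have L: "w \<le> length a" using r by (simp add: length_word)
    have "take w b = take w a" using tk L by (metis min.absorb1 take_take)
    then have "bin w (bl r') = bin w (bl r)" using r r' unfolding word_def by simp
    then have "bl r' = bl r" using bin_inj r r' by blast
    then have "length a = length b" using r r' by (simp add: length_word)
    then show False using prefix_eq_len p ne by blast
  qed
qed


lemma log_prod_div:
  fixes a b :: "nat \<Rightarrow> real"
  assumes "\<And>t. t < n \<Longrightarrow> a t > 0" "\<And>t. t < n \<Longrightarrow> b t > 0"
  shows "log 2 ((\<Prod>t<n. a t) / (\<Prod>t<n. b t)) = (\<Sum>t<n. log 2 (a t / b t))"
  using assms
proof (induction n)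
  case 0
  then show ?case by simp
next
  case (Suc n)
  have pa: "(\<Prod>t<n. a t) > 0" using Suc.prems by (intro prod_pos) auto
  have pb: "(\<Prod>t<n. b t) > 0" using Suc.prems by (intro prod_pos) auto
  have e: "(\<Prod>t<Suc n. a t) / (\<Prod>t<Suc n. b t) = ((\<Prod>t<n. a t) / (\<Prod>t<n. b t)) * (a n / b n)"
    by simp
  have "log 2 ((\<Prod>t<Suc n. a t) / (\<Prod>t<Suc n. b t)) = log 2 (((\<Prod>t<n. a t) / (\<Prod>t<n. b t)) * (a n / b n))"
    by (subst e) (rule refl)
  also have "\<dots> = log 2 ((\<Prod>t<n. a t) / (\<Prod>t<n. b t)) + log 2 (a n / b n)"
    by (rule log_mult_pos) (use pa pb Suc.prems in auto)
  also have "\<dots> = (\<Sum>t<Suc n. log 2 (a t / b t))"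
    using Suc by simp
  finally show ?case .
qed

lemma set_to_ind:
  fixes P :: "'a::finite \<Rightarrow> 'b::finite \<Rightarrow> real"
  shows "(\<Sum>(x,y)\<in>{(x,y). R x y}. P x y) = (\<Sum>x\<in>UNIV. \<Sum>y\<in>UNIV. P x y * (if R x y then 1 else 0))"
proof -
  have "(\<Sum>(x,y)\<in>{(x,y). R x y}. P x y) = (\<Sum>u\<in>{u\<in>UNIV. R (fst u) (snd u)}. P (fst u) (snd u))"
    by (intro sum.cong) auto
  also have "\<dots> = (\<Sum>u\<in>UNIV. if R (fst u) (snd u) then P (fst u) (snd u) else 0)"
    by (rule sum.inter_filter) simp
  also have "\<dots> = (\<Sum>x\<in>UNIV. \<Sum>y\<in>UNIV. if R x y then P x y else 0)"
    unfolding UNIV_Times_UNIV[symmetric] sum.cartesian_product by (simp add: case_prod_beta)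
  also have "\<dots> = (\<Sum>x\<in>UNIV. \<Sum>y\<in>UNIV. P x y * (if R x y then 1 else 0))"
    by (intro sum.cong refl) simp
  finally show ?thesis .
qed

lemma nth_map2: "t < length xs \<Longrightarrow> t < length ys \<Longrightarrow> map2 h xs ys ! t = h (xs ! t) (ys ! t)"
  by simp

lemma map2_eq_iff:
  "length xs = n \<Longrightarrow> length ys = n \<Longrightarrow> length xs' = n \<Longrightarrow> length ys' = n \<Longrightarrow>
   map2 h xs ys = map2 h xs' ys' \<longleftrightarrow> (\<forall>t<n. h (xs!t) (ys!t) = h (xs'!t) (ys'!t))"
  by (auto simp: list_eq_iff_nth_eq)

lemma map_eq_iff_n:
  "length ys = n \<Longrightarrow> length ys' = n \<Longrightarrow> map g ys' = map g ys \<longleftrightarrow> (\<forall>t<n. g (ys'!t) = g (ys!t))"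
  by (auto simp: list_eq_iff_nth_eq)

locale src =
  fixes P :: "'x::finite \<Rightarrow> 'y::finite \<Rightarrow> real"
    and f :: "'x \<Rightarrow> 'y \<Rightarrow> 'u::finite"
    and g :: "'y \<Rightarrow> 'z::finite"
    and ys0 :: "'y list"
  assumes full_support: "\<And>x y. P x y > 0"
    and sum_one: "(\<Sum>x\<in>UNIV. \<Sum>y\<in>UNIV. P x y) = 1"
    and enum: "distinct ys0" "set ys0 = UNIV"
begin

lemma jf_eq: "jfun ys0 f g x z = jfun ys0 f g x' z \<longleftrightarrow> (\<forall>y. g y = z \<longrightarrow> f x y = f x' y)"
  unfolding jfun_def using enum by auto

definition kap :: "'x list \<Rightarrow> 'z list \<Rightarrow> 'u list list" where
  "kap xs zs = map2 (jfun ys0 f g) xs zs"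

definition pp :: "'x list \<times> 'y list \<Rightarrow> real" where "pp a = prod_pmf_n P (fst a) (snd a)"
definition bb :: "'x list \<times> 'y list \<Rightarrow> 'z list" where "bb a = map g (snd a)"
definition kk :: "'x list \<times> 'y list \<Rightarrow> 'u list list" where "kk a = kap (fst a) (map g (snd a))"

definition pAB :: "'u list \<Rightarrow> 'z \<Rightarrow> real" where
  "pAB a b = (\<Sum>(x,y)\<in>{(x,y). jfun ys0 f g x (g y) = a \<and> g y = b}. P x y)"
definition pB :: "'z \<Rightarrow> real" where
  "pB b = (\<Sum>(x,y)\<in>{(x,y). g y = b}. P x y)"
definition hh :: "'x \<Rightarrow> 'y \<Rightarrow> real" where
  "hh x y = log 2 (pB (g y) / pAB (jfun ys0 f g x (g y)) (g y))"

abbreviation "HH \<equiv> cond_entropy P (\<lambda>x y. jfun ys0 f g x (g y)) (\<lambda>x y. g y)"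

lemma pp_pos: "pp a > 0"
  unfolding pp_def prod_pmf_n_def by (intro prod_pos) (auto intro: full_support)

lemma pAB_pos: "pAB (jfun ys0 f g x (g y)) (g y) > 0"
proof -
  have "P x y \<le> pAB (jfun ys0 f g x (g y)) (g y)" unfolding pAB_def
    using member_le_sum[of "(x,y)" "{(x',y'). jfun ys0 f g x' (g y') = jfun ys0 f g x (g y) \<and> g y' = g y}" "\<lambda>(x,y). P x y"]
      full_support by (auto intro: less_imp_le)
  then show ?thesis using full_support[of x y] by simp
qed

lemma pB_pos: "pB (g y) > 0"
proof -
  obtain x :: 'x where True by blast
  have "P x y \<le> pB (g y)" unfolding pB_def
    using member_le_sum[of "(x,y)" "{(x',y'). g y' = g y}" "\<lambda>(x,y). P x y"]
      full_support by (auto intro: less_imp_le)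
  then show ?thesis using full_support[of x y] by simp
qed

lemma GL:
  assumes "\<And>xs' ys'. length xs' = n \<Longrightarrow> length ys' = n \<Longrightarrow> C (xs',ys') = (\<forall>t<n. R t (xs'!t) (ys'!t))"
  shows "sum pp {a'\<in>Ln n \<times> Ln n. C a'} = (\<Prod>t<n. \<Sum>(x,y)\<in>{(x,y). R t x y}. P x y)"
proof -
  have "sum pp {a'\<in>Ln n \<times> Ln n. C a'} = (\<Sum>a'\<in>Ln n \<times> Ln n. if C a' then pp a' else 0)"
    by (rule sum.inter_filter) simp
  also have "\<dots> = (\<Sum>(xs,ys)\<in>Ln n \<times> Ln n. prod_pmf_n P xs ys * (if \<forall>t<n. R t (xs!t) (ys!t) then 1 else 0))"
    using assms by (intro sum.cong refl) (auto simp: pp_def Ln_def)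
  also have "\<dots> = (\<Prod>t<n. \<Sum>x\<in>UNIV. \<Sum>y\<in>UNIV. P x y * (if R t x y then 1 else 0))"
    by (rule L2)
  also have "\<dots> = (\<Prod>t<n. \<Sum>(x,y)\<in>{(x,y). R t x y}. P x y)"
    by (simp add: set_to_ind)
  finally show ?thesis .
qed

lemma T_prod:
  assumes "length xs = n" "length ys = n"
  shows "sum pp {a'\<in>Ln n \<times> Ln n. bb a' = bb (xs,ys)} = (\<Prod>t<n. pB (g (ys!t)))"
  unfolding pB_def
  by (rule GL) (use assms in \<open>auto simp: bb_def list_eq_iff_nth_eq\<close>)

lemma Q_prod:
  assumes "length xs = n" "length ys = n"
  shows "sum pp {a'\<in>Ln n \<times> Ln n. bb a' = bb (xs,ys) \<and> kk a' = kk (xs,ys)}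
     = (\<Prod>t<n. pAB (jfun ys0 f g (xs!t) (g (ys!t))) (g (ys!t)))"
proof -
  have "sum pp {a'\<in>Ln n \<times> Ln n. bb a' = bb (xs,ys) \<and> kk a' = kk (xs,ys)}
     = (\<Prod>t<n. \<Sum>(x,y)\<in>{(x,y). g y = g (ys!t) \<and> jfun ys0 f g x (g y) = jfun ys0 f g (xs!t) (g (ys!t))}. P x y)"
  proof (rule GL)
    fix xs' :: "'x list" and ys' :: "'y list" assume l: "length xs' = n" "length ys' = n"
    show "(bb (xs',ys') = bb (xs,ys) \<and> kk (xs',ys') = kk (xs,ys)) =
      (\<forall>t<n. g (ys'!t) = g (ys!t) \<and> jfun ys0 f g (xs'!t) (g (ys'!t)) = jfun ys0 f g (xs!t) (g (ys!t)))"
      using l assms by (auto simp: bb_def kk_def kap_def list_eq_iff_nth_eq)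
  qed
  also have "\<dots> = (\<Prod>t<n. pAB (jfun ys0 f g (xs!t) (g (ys!t))) (g (ys!t)))"
    unfolding pAB_def by (intro prod.cong refl sum.cong) auto
  finally show ?thesis .
qed

lemma entropy_eq: "HH = (\<Sum>x\<in>UNIV. \<Sum>y\<in>UNIV. P x y * hh x y)"
proof -
  define F where "F = (\<lambda>(x,y). (jfun ys0 f g x (g y), g y))"
  have H1: "HH = - (\<Sum>(a,b)\<in>F ` UNIV. pAB a b * log 2 (pAB a b / pB b))"
    unfolding cond_entropy_def Let_def pAB_def pB_def F_def by simp
  have "(\<Sum>x\<in>UNIV. \<Sum>y\<in>UNIV. P x y * hh x y) = (\<Sum>u\<in>UNIV. P (fst u) (snd u) * hh (fst u) (snd u))"
    unfolding sum.cartesian_product by (simp add: case_prod_beta)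
  also have "\<dots> = (\<Sum>v\<in>F ` UNIV. \<Sum>u\<in>{u\<in>UNIV. F u = v}. P (fst u) (snd u) * hh (fst u) (snd u))"
    by (rule sum.image_gen) simp
  also have "\<dots> = (\<Sum>v\<in>F ` UNIV. - (pAB (fst v) (snd v) * log 2 (pAB (fst v) (snd v) / pB (snd v))))"
  proof (rule sum.cong[OF refl])
    fix v assume "v \<in> F ` UNIV"
    then obtain x0 y0 where v: "v = F (x0, y0)" by auto
    have hu: "hh (fst u) (snd u) = - log 2 (pAB (fst v) (snd v) / pB (snd v))" if "u \<in> {u\<in>UNIV. F u = v}" for u
    proof -
      have Fu: "F u = v" using that by simp
      have "hh (fst u) (snd u) = log 2 (pB (snd v) / pAB (fst v) (snd v))"
        using Fu unfolding hh_def F_def by (auto simp: case_prod_beta)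
      also have "\<dots> = - log 2 (pAB (fst v) (snd v) / pB (snd v))"
        using pAB_pos[of x0 y0] pB_pos[of y0] unfolding v F_def
        by (simp add: log_divide_pos)
      finally show ?thesis .
    qed
    have "(\<Sum>u\<in>{u\<in>UNIV. F u = v}. P (fst u) (snd u) * hh (fst u) (snd u))
      = (\<Sum>u\<in>{u\<in>UNIV. F u = v}. P (fst u) (snd u)) * (- log 2 (pAB (fst v) (snd v) / pB (snd v)))"
      using hu by (simp add: sum_distrib_right sum_negf)
    also have "(\<Sum>u\<in>{u\<in>UNIV. F u = v}. P (fst u) (snd u)) = pAB (fst v) (snd v)"
      unfolding pAB_def F_def by (intro sum.cong) (auto simp: case_prod_beta)
    finally show "(\<Sum>u\<in>{u\<in>UNIV. F u = v}. P (fst u) (snd u) * hh (fst u) (snd u))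
       = - (pAB (fst v) (snd v) * log 2 (pAB (fst v) (snd v) / pB (snd v)))" by simp
  qed
  also have "\<dots> = HH"
    unfolding H1 by (simp add: sum_negf case_prod_beta)
  finally show ?thesis by simp
qed

lemma EL:
  "(\<Sum>a\<in>Ln n \<times> Ln n. pp a * log 2 (sum pp {a'\<in>Ln n \<times> Ln n. bb a' = bb a}
      / sum pp {a'\<in>Ln n \<times> Ln n. bb a' = bb a \<and> kk a' = kk a})) = real n * HH"
proof -
  have "(\<Sum>a\<in>Ln n \<times> Ln n. pp a * log 2 (sum pp {a'\<in>Ln n \<times> Ln n. bb a' = bb a}
      / sum pp {a'\<in>Ln n \<times> Ln n. bb a' = bb a \<and> kk a' = kk a}))
    = (\<Sum>(xs,ys)\<in>Ln n \<times> Ln n. prod_pmf_n P xs ys * (\<Sum>t<n. hh (xs!t) (ys!t)))"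
  proof (rule sum.cong[OF refl])
    fix a assume a: "a \<in> (Ln n \<times> Ln n :: ('x list \<times> 'y list) set)"
    obtain xs ys where xy: "a = (xs,ys)" by (cases a)
    have l: "length xs = n" "length ys = n" using a xy by (auto simp: Ln_def)
    have "log 2 (sum pp {a'\<in>Ln n \<times> Ln n. bb a' = bb a} / sum pp {a'\<in>Ln n \<times> Ln n. bb a' = bb a \<and> kk a' = kk a})
      = log 2 ((\<Prod>t<n. pB (g (ys!t))) / (\<Prod>t<n. pAB (jfun ys0 f g (xs!t) (g (ys!t))) (g (ys!t))))"
      unfolding xy T_prod[OF l] Q_prod[OF l] ..
    also have "\<dots> = (\<Sum>t<n. hh (xs!t) (ys!t))"
      unfolding hh_def by (rule log_prod_div) (auto intro: pB_pos pAB_pos)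
    finally show "pp a * log 2 (sum pp {a'\<in>Ln n \<times> Ln n. bb a' = bb a} / sum pp {a'\<in>Ln n \<times> Ln n. bb a' = bb a \<and> kk a' = kk a})
      = (case a of (xs,ys) \<Rightarrow> prod_pmf_n P xs ys * (\<Sum>t<n. hh (xs!t) (ys!t)))"
      unfolding xy pp_def by simp
  qed
  also have "\<dots> = real n * (\<Sum>x\<in>UNIV. \<Sum>y\<in>UNIV. P x y * hh x y)"
    by (rule L1[OF sum_one])
  finally show ?thesis using entropy_eq by simp
qed

lemma total_one: "(\<Sum>a\<in>Ln n \<times> Ln n. pp a) = 1"
  using L2[where P=P and n=n and R="\<lambda>_ _ _. True"] sum_one by (simp add: pp_def case_prod_beta)

end




lemma lim_aux: "(\<lambda>n. (log 2 (real n) + C) / real n) \<longlonglongrightarrow> 0"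
proof -
  have l: "(\<lambda>n. ln (real n) / real n) \<longlonglongrightarrow> 0"
    using filterlim_compose[OF ln_x_over_x_tendsto_0 filterlim_real_sequentially] .
  have "(\<lambda>n. (ln (real n) / real n) / ln 2 + C / real n) \<longlonglongrightarrow> 0 / ln 2 + 0"
    by (intro tendsto_add tendsto_divide l tendsto_const lim_const_over_n) auto
  moreover have "(\<lambda>n. (log 2 (real n) + C) / real n) = (\<lambda>n. (ln (real n) / real n) / ln 2 + C / real n)"
    by (rule ext) (simp add: log_def add_divide_distrib)
  ultimately show ?thesis by simp
qed

context src
begin

lemma converse:
  assumes n: "n \<ge> 1" and z: "zero_error_code f g n enc dec"
  shows "HH \<le> code_rate P g n enc"
proof -
  define A where "A = (Ln n \<times> Ln n :: ('x list \<times> 'y list) set)"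
  define c where "c a = enc (fst a) (map g (snd a))" for a
  have pf: "prefix_free (c ` A)"
  proof (rule prefix_free_subset)
    show "prefix_free {enc xs zs | xs zs. length xs = n \<and> length zs = n}"
      using z unfolding zero_error_code_def by blast
    show "c ` A \<subseteq> {enc xs zs | xs zs. length xs = n \<and> length zs = n}"
    proof
      fix w assume "w \<in> c ` A"
      then obtain xs ys where h: "length xs = n" "length ys = n" "w = enc xs (map g ys)"
        unfolding A_def c_def Ln_def by auto
      show "w \<in> {enc xs zs | xs zs. length xs = n \<and> length zs = n}"
        using h by (intro CollectI exI[of _ xs] exI[of _ "map g ys"]) simp
    qed
  qed
  have dec_ok: "dec ys (enc xs (map g ys)) = map2 f xs ys" if "length xs = n" "length ys = n" for xs ys
    using z that unfolding zero_error_code_def by blast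
  have sep: "c a \<noteq> c a'" if a: "a \<in> A" "a' \<in> A" "bb a = bb a'" "kk a \<noteq> kk a'" for a a'
  proof
    assume eq: "c a = c a'"
    obtain xs ys where xy: "a = (xs, ys)" by (cases a)
    obtain xs' ys' where xy': "a' = (xs', ys')" by (cases a')
    have l: "length xs = n" "length ys = n" "length xs' = n" "length ys' = n"
      using a xy xy' unfolding A_def Ln_def by auto
    define zs where "zs = map g ys"
    have zs': "map g ys' = zs" using a(3) xy xy' unfolding bb_def zs_def by simp
    have "kap xs zs \<noteq> kap xs' zs" using a(4) xy xy' zs' unfolding kk_def zs_def by simp
    then obtain t where t: "t < n" "jfun ys0 f g (xs!t) (zs!t) \<noteq> jfun ys0 f g (xs'!t) (zs!t)"
      using l unfolding kap_def zs_def by (auto simp: map2_eq_iff[of xs n "map g ys" xs' "map g ys"])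
    then obtain y where y: "g y = zs!t" "f (xs!t) y \<noteq> f (xs'!t) y"
      using jf_eq by blast
    define ys2 where "ys2 = ys[t := y]"
    have l2: "length ys2 = n" using l unfolding ys2_def by simp
    have m2: "map g ys2 = zs"
      using y(1) t l unfolding ys2_def zs_def by (metis list_update_id map_update nth_map)
    have "enc xs zs = enc xs' zs" using eq xy xy' zs' unfolding c_def zs_def by simp
    then have "map2 f xs ys2 = map2 f xs' ys2"
      using dec_ok[OF l(1) l2] dec_ok[OF l(3) l2] m2 by simp
    then have "f (xs!t) (ys2!t) = f (xs'!t) (ys2!t)"
      using map2_eq_iff[of xs n ys2 xs' ys2 f] l l2 t by auto
    then show False using y t l unfolding ys2_def by simp
  qed
  have G: "(\<Sum>a\<in>A. pp a * log 2 (sum pp {a'\<in>A. bb a' = bb a} / sum pp {a'\<in>A. bb a' = bb a \<and> kk a' = kk a}))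
     \<le> (\<Sum>a\<in>A. pp a * real (length (c a)))"
    by (rule gibbs_cond) (use pf sep pp_pos in \<open>auto simp: A_def\<close>)
  have "real n * HH \<le> (\<Sum>a\<in>A. pp a * real (length (c a)))"
    using G EL[of n] unfolding A_def by simp
  moreover have "code_rate P g n enc = (1 / real n) * (\<Sum>a\<in>A. pp a * real (length (c a)))"
    unfolding code_rate_def A_def Ln_def pp_def c_def by (simp add: case_prod_beta)
  ultimately have "real n * HH \<le> real n * code_rate P g n enc" using n by simp
  moreover have "real n > 0" using n by simp
  ultimately show ?thesis by (simp add: mult_le_cancel_left_pos)
qed


definition Qk :: "'z list \<Rightarrow> 'u list list \<Rightarrow> real" where
  "Qk zs k = sum pp {a\<in>Ln (length zs) \<times> Ln (length zs). bb a = zs \<and> kk a = k}"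
definition Ks :: "'z list \<Rightarrow> 'u list list set" where
  "Ks zs = (\<lambda>xs. kap xs zs) ` Ln (length zs)"
definition phi :: "'z list \<Rightarrow> 'u list list \<Rightarrow> real \<times> nat" where
  "phi zs k = (- Qk zs k, to_nat k)"
definition rank :: "'z list \<Rightarrow> 'x list \<Rightarrow> nat" where
  "rank zs xs = card {k\<in>Ks zs. phi zs k \<le> phi zs (kap xs zs)}"
definition Wn :: "nat \<Rightarrow> nat" where
  "Wn n = bl (n * card (UNIV::'x set))"
definition encA :: "nat \<Rightarrow> 'x list \<Rightarrow> 'z list \<Rightarrow> bool list" where
  "encA n xs zs = word (Wn n) (rank zs xs)"
definition decA :: "nat \<Rightarrow> 'y list \<Rightarrow> bool list \<Rightarrow> 'u list" where
  "decA n ys c = map2 f (SOME xs'. length xs' = n \<and> encA n xs' (map g ys) = c) ys"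

lemma finite_Ks: "finite (Ks zs)"
  unfolding Ks_def by simp

lemma rank_ge1: assumes "length xs = length zs" shows "1 \<le> rank zs xs"
proof -
  have m: "kap xs zs \<in> {k\<in>Ks zs. phi zs k \<le> phi zs (kap xs zs)}" using assms by (auto simp: Ks_def Ln_def)
  have fin: "finite {k\<in>Ks zs. phi zs k \<le> phi zs (kap xs zs)}" using finite_Ks by simp
  have "card {k\<in>Ks zs. phi zs k \<le> phi zs (kap xs zs)} > 0" using m fin card_gt_0_iff by blast
  then show ?thesis unfolding rank_def by simp
qed

lemma rank_le: "length xs = length zs \<Longrightarrow> rank zs xs \<le> card (UNIV::'x set) ^ length zs"
proof -
  have "rank zs xs \<le> card (Ks zs)" unfolding rank_def by (intro card_mono finite_Ks) auto
  also have "\<dots> \<le> card (Ln (length zs) :: 'x list set)" unfolding Ks_def by (rule card_image_le) simp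
  also have "\<dots> = card (UNIV::'x set) ^ length zs" by (rule card_Ln)
  finally show "rank zs xs \<le> card (UNIV::'x set) ^ length zs" .
qed

lemma phi_inj: "phi zs k1 = phi zs k2 \<Longrightarrow> k1 = k2"
  unfolding phi_def by (auto dest: injD[OF inj_to_nat])

lemma rank_lt:
  assumes "k1 \<in> Ks zs" "k2 \<in> Ks zs" "phi zs k1 < phi zs k2"
  shows "card {k\<in>Ks zs. phi zs k \<le> phi zs k1} < card {k\<in>Ks zs. phi zs k \<le> phi zs k2}"
proof (rule psubset_card_mono)
  show "finite {k\<in>Ks zs. phi zs k \<le> phi zs k2}" using finite_Ks by simp
  have "{k\<in>Ks zs. phi zs k \<le> phi zs k1} \<subseteq> {k\<in>Ks zs. phi zs k \<le> phi zs k2}"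
    using assms(3) by auto
  moreover have "k2 \<in> {k\<in>Ks zs. phi zs k \<le> phi zs k2}" "k2 \<notin> {k\<in>Ks zs. phi zs k \<le> phi zs k1}"
    using assms by auto
  ultimately show "{k\<in>Ks zs. phi zs k \<le> phi zs k1} \<subset> {k\<in>Ks zs. phi zs k \<le> phi zs k2}" by blast
qed

lemma rank_inj:
  assumes "length xs = length zs" "length xs' = length zs" "rank zs xs = rank zs xs'"
  shows "kap xs zs = kap xs' zs"
proof (rule ccontr)
  assume ne: "kap xs zs \<noteq> kap xs' zs"
  have k: "kap xs zs \<in> Ks zs" "kap xs' zs \<in> Ks zs" using assms unfolding Ks_def Ln_def by auto
  have "phi zs (kap xs zs) \<noteq> phi zs (kap xs' zs)" using ne phi_inj by blast
  then have "phi zs (kap xs zs) < phi zs (kap xs' zs) \<or> phi zs (kap xs' zs) < phi zs (kap xs zs)"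
    by auto
  then show False
    using rank_lt[OF k(1) k(2)] rank_lt[OF k(2) k(1)] assms(3) unfolding rank_def by auto
qed

lemma Qk_nonneg: "Qk zs k \<ge> 0"
  unfolding Qk_def by (intro sum_nonneg) (auto intro: less_imp_le pp_pos)

lemma rank_bound:
  assumes l: "length xs = n" "length ys = n" and zs: "zs = map g ys"
  shows "real (rank zs xs) * Qk zs (kap xs zs) \<le> sum pp {a\<in>Ln n \<times> Ln n. bb a = zs}"
proof -
  define k0 where "k0 = kap xs zs"
  define S where "S = {k\<in>Ks zs. phi zs k \<le> phi zs k0}"
  have lz: "length zs = n" using l zs by simp
  have "real (card S) * Qk zs k0 \<le> sum (Qk zs) S"
  proof (rule sum_bounded_below)
    fix k assume "k \<in> S"
    then have "phi zs k \<le> phi zs k0" unfolding S_def by simp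
    then show "Qk zs k0 \<le> Qk zs k" unfolding phi_def by (auto simp: less_eq_prod_def)
  qed
  also have "\<dots> \<le> sum (Qk zs) (Ks zs)"
    by (rule sum_mono2) (auto simp: S_def finite_Ks Qk_nonneg)
  also have "\<dots> = sum pp {a\<in>Ln n \<times> Ln n. bb a = zs}"
  proof -
    define B where "B = {a\<in>Ln n \<times> Ln n. bb a = zs}"
    have fB: "finite B" unfolding B_def by simp
    have img: "kk ` B = Ks zs"
    proof
      show "kk ` B \<subseteq> Ks zs"
      proof
        fix k assume "k \<in> kk ` B"
        then obtain xs' ys' where h: "(xs',ys') \<in> B" "k = kk (xs',ys')" by auto
        then have "length xs' = n" "map g ys' = zs" by (auto simp: B_def Ln_def bb_def)
        then show "k \<in> Ks zs" using h(2) lz unfolding Ks_def kk_def Ln_def by auto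
      qed
      show "Ks zs \<subseteq> kk ` B"
      proof
        fix k assume "k \<in> Ks zs"
        then obtain xs' where xs': "length xs' = n" "k = kap xs' zs" unfolding Ks_def Ln_def lz by auto
        have "(xs', ys) \<in> B" unfolding B_def bb_def Ln_def using xs' l zs by simp
        moreover have "kk (xs', ys) = k" unfolding kk_def using xs' zs by simp
        ultimately show "k \<in> kk ` B" by force
      qed
    qed
    have "sum pp B = (\<Sum>k\<in>kk ` B. sum pp {a\<in>B. kk a = k})"
      by (rule sum.image_gen[OF fB])
    also have "\<dots> = sum (Qk zs) (Ks zs)"
      unfolding img
    proof (rule sum.cong[OF refl])
      fix k assume "k \<in> Ks zs"
      show "sum pp {a\<in>B. kk a = k} = Qk zs k" unfolding Qk_def lz B_def by (intro sum.cong) auto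
    qed
    finally show ?thesis unfolding B_def by simp
  qed
  finally show ?thesis unfolding S_def k0_def rank_def .
qed

lemma bl_rank_lt:
  assumes "n \<ge> 1" "length xs = n" "length zs = n"
  shows "bl (rank zs xs) < 2 ^ Wn n"
proof -
  define cx where "cx = card (UNIV::'x set)"
  have "rank zs xs \<le> cx ^ n" using rank_le[of xs zs] assms unfolding cx_def by simp
  also have "cx ^ n < (2 ^ cx) ^ n"
    using assms(1) by (intro power_strict_mono less_exp) auto
  also have "\<dots> = 2 ^ (n * cx)" by (simp add: power_mult[symmetric] mult.commute)
  finally have "bl (rank zs xs) \<le> n * cx" by (rule bl_le)
  also have "n * cx < 2 ^ Wn n" unfolding Wn_def cx_def by (rule bl_gt)
  finally show ?thesis .
qed

lemma encA_code:
  assumes n: "n \<ge> 1"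
  shows "zero_error_code f g n (encA n) (decA n)"
  unfolding zero_error_code_def
proof (intro conjI allI impI)
  show "prefix_free {encA n xs zs | xs zs. length xs = n \<and> length zs = n}"
  proof (rule prefix_free_subset[OF word_pf[of "Wn n"]])
    show "{encA n xs zs | xs zs. length xs = n \<and> length zs = n} \<subseteq> {word (Wn n) r | r. bl r < 2 ^ Wn n}"
    proof
      fix w assume "w \<in> {encA n xs zs | xs zs. length xs = n \<and> length zs = n}"
      then obtain xs zs where h: "w = encA n xs zs" "length xs = n" "length zs = n" by blast
      have "bl (rank zs xs) < 2 ^ Wn n" using bl_rank_lt[OF n h(2,3)] .
      then show "w \<in> {word (Wn n) r | r. bl r < 2 ^ Wn n}" unfolding h(1) encA_def by blast
    qed
  qed
  fix xs :: "'x list" and ys :: "'y list" assume l: "length xs = n" "length ys = n"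
  define zs where "zs = map g ys"
  have lz: "length zs = n" using l unfolding zs_def by simp
  define xs0 where "xs0 = (SOME xs'. length xs' = n \<and> encA n xs' zs = encA n xs zs)"
  have "length xs0 = n \<and> encA n xs0 zs = encA n xs zs"
    unfolding xs0_def by (rule someI[of _ xs]) (use l in simp)
  then have x0: "length xs0 = n" "encA n xs0 zs = encA n xs zs" by auto
  have "rank zs xs0 = rank zs xs"
    using word_inj[OF x0(2)[unfolded encA_def]] bl_rank_lt[OF n x0(1) lz] bl_rank_lt[OF n l(1) lz] by blast
  then have "kap xs0 zs = kap xs zs" using rank_inj[of xs0 zs xs] x0(1) l(1) lz by simp
  then have j: "\<forall>t<n. jfun ys0 f g (xs0!t) (zs!t) = jfun ys0 f g (xs!t) (zs!t)"
    unfolding kap_def using map2_eq_iff[of xs0 n zs xs zs "jfun ys0 f g"] x0(1) l lz by simp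
  have "\<forall>t<n. f (xs0!t) (ys!t) = f (xs!t) (ys!t)"
  proof (intro allI impI)
    fix t assume t: "t < n"
    have e: "zs ! t = g (ys ! t)" unfolding zs_def using t l by simp
    have "jfun ys0 f g (xs0!t) (zs!t) = jfun ys0 f g (xs!t) (zs!t)" using j t by blast
    then have "jfun ys0 f g (xs0!t) (g (ys!t)) = jfun ys0 f g (xs!t) (g (ys!t))" unfolding e .
    then show "f (xs0!t) (ys!t) = f (xs!t) (ys!t)"
      using jf_eq[where x="xs0!t" and x'="xs!t" and z="g (ys!t)"] by blast
  qed
  then have "map2 f xs0 ys = map2 f xs ys" using map2_eq_iff[of xs0 n ys xs ys f] x0(1) l by simp
  then show "decA n ys (encA n xs (map g ys)) = map2 f xs ys"
    unfolding decA_def xs0_def zs_def by simp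
qed

lemma encA_rate_upper:
  assumes n: "n \<ge> 1"
  shows "code_rate P g n (encA n) \<le> HH + (real (Wn n) + 1) / real n"
proof -
  define A where "A = (Ln n \<times> Ln n :: ('x list \<times> 'y list) set)"
  define T where "T a = sum pp {a'\<in>A. bb a' = bb a}" for a
  define Q where "Q a = sum pp {a'\<in>A. bb a' = bb a \<and> kk a' = kk a}" for a
  have pt: "pp a * real (length (encA n (fst a) (map g (snd a)))) \<le> pp a * (real (Wn n) + 1 + log 2 (T a / Q a))"
    if a: "a \<in> A" for a
  proof -
    obtain xs ys where xy: "a = (xs, ys)" by (cases a)
    have l: "length xs = n" "length ys = n" using a xy unfolding A_def Ln_def by auto
    define zs where "zs = map g ys"
    have lz: "length zs = n" using l zs_def by simp
    have QQ: "Q a = Qk zs (kap xs zs)"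
      unfolding Q_def Qk_def lz A_def xy bb_def kk_def zs_def using l(2) by (intro sum.cong) auto
    have TT: "T a = sum pp {a\<in>Ln n \<times> Ln n. bb a = zs}"
      unfolding T_def A_def xy bb_def zs_def by simp
    have Qpos: "Q a > 0"
    proof -
      have "pp a \<le> Q a" unfolding Q_def using a
        by (intro member_le_sum) (auto intro: less_imp_le pp_pos simp: A_def)
      then show ?thesis using pp_pos[of a] by simp
    qed
    have r1: "1 \<le> rank zs xs" using rank_ge1 l lz by simp
    have rb: "real (rank zs xs) * Q a \<le> T a" using rank_bound[OF l zs_def] QQ TT by simp
    then have "real (rank zs xs) \<le> T a / Q a" using Qpos by (simp add: field_simps)
    then have lg: "log 2 (real (rank zs xs)) \<le> log 2 (T a / Q a)"
      using r1 by (subst log_le_cancel_iff) auto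
    have "real (length (encA n xs zs)) = real (Wn n) + real (bl (rank zs xs))"
      unfolding encA_def length_word by simp
    also have "\<dots> \<le> real (Wn n) + 1 + log 2 (T a / Q a)"
      using bl_log[OF r1] lg by simp
    finally show ?thesis using pp_pos[of a] unfolding xy zs_def by (simp add: mult_left_mono)
  qed
  have "code_rate P g n (encA n) = (1 / real n) * (\<Sum>a\<in>A. pp a * real (length (encA n (fst a) (map g (snd a)))))"
    unfolding code_rate_def A_def Ln_def pp_def by (simp add: case_prod_beta)
  also have "\<dots> \<le> (1 / real n) * (\<Sum>a\<in>A. pp a * (real (Wn n) + 1 + log 2 (T a / Q a)))"
  proof -
    have "(\<Sum>a\<in>A. pp a * real (length (encA n (fst a) (map g (snd a))))) \<le> (\<Sum>a\<in>A. pp a * (real (Wn n) + 1 + log 2 (T a / Q a)))"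
      by (rule sum_mono) (rule pt)
    then show ?thesis by (rule mult_left_mono) simp
  qed
  also have "(\<Sum>a\<in>A. pp a * (real (Wn n) + 1 + log 2 (T a / Q a)))
      = (real (Wn n) + 1) * (\<Sum>a\<in>A. pp a) + (\<Sum>a\<in>A. pp a * log 2 (T a / Q a))"
  proof -
    have "(\<Sum>a\<in>A. pp a * (real (Wn n) + 1 + log 2 (T a / Q a)))
      = (\<Sum>a\<in>A. (real (Wn n) + 1) * pp a + pp a * log 2 (T a / Q a))"
      by (intro sum.cong refl) (simp add: algebra_simps)
    then show ?thesis by (simp add: sum.distrib sum_distrib_left)
  qed
  also have "\<dots> = (real (Wn n) + 1) + real n * HH"
    using total_one[of n] EL[of n] unfolding A_def T_def Q_def by simp
  also have "(1 / real n) * ((real (Wn n) + 1) + real n * HH) = HH + (real (Wn n) + 1) / real n"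
    using n by (simp add: field_simps)
  finally show ?thesis .
qed

lemma Wn_bound:
  assumes "n \<ge> 1"
  shows "real (Wn n) \<le> log 2 (real n) + log 2 (real (card (UNIV::'x set))) + 1"
proof -
  have c: "card (UNIV::'x set) \<ge> 1" by (simp add: Suc_le_eq finite_UNIV_card_ge_0)
  have "real (Wn n) \<le> log 2 (real (n * card (UNIV::'x set))) + 1"
    unfolding Wn_def by (rule bl_log) (use assms c in simp)
  also have "log 2 (real (n * card (UNIV::'x set))) = log 2 (real n) + log 2 (real (card (UNIV::'x set)))"
    using assms c by (simp add: log_mult_pos)
  finally show ?thesis by simp
qed

lemma achievable_HH: "achievable_rate P f g HH"
  unfolding achievable_rate_def
proof (intro exI conjI allI impI)
  show "zero_error_code f g n (encA n) (decA n)" if "n \<ge> 1" for n using encA_code that .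
  define C where "C = log 2 (real (card (UNIV::'x set))) + 2"
  have up: "(\<lambda>n. HH + (log 2 (real n) + C) / real n) \<longlonglongrightarrow> HH + 0"
    by (intro tendsto_add tendsto_const lim_aux)
  show "(\<lambda>n. code_rate P g n (encA n)) \<longlonglongrightarrow> HH"
  proof (rule tendsto_sandwich[of "\<lambda>_. HH" _ _ "\<lambda>n. HH + (log 2 (real n) + C) / real n"])
    show "\<forall>\<^sub>F n in sequentially. HH \<le> code_rate P g n (encA n)"
      using eventually_ge_at_top[of 1] by eventually_elim (rule converse[OF _ encA_code])
    show "\<forall>\<^sub>F n in sequentially. code_rate P g n (encA n) \<le> HH + (log 2 (real n) + C) / real n"
      using eventually_ge_at_top[of 1]
    proof eventually_elim
      case (elim n)
      have "code_rate P g n (encA n) \<le> HH + (real (Wn n) + 1) / real n" by (rule encA_rate_upper[OF elim])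
      also have "\<dots> \<le> HH + (log 2 (real n) + C) / real n"
        using Wn_bound[OF elim] elim unfolding C_def by (intro add_left_mono divide_right_mono) auto
      finally show ?case .
    qed
    show "(\<lambda>_. HH) \<longlonglongrightarrow> HH" by simp
    show "(\<lambda>n. HH + (log 2 (real n) + C) / real n) \<longlonglongrightarrow> HH" using up by simp
  qed
qed

lemma optimal: "optimal_rate P f g = HH"
  unfolding optimal_rate_def
proof (rule cInf_eq_minimum)
  show "HH \<in> {R. achievable_rate P f g R}" using achievable_HH by simp
  fix R assume "R \<in> {R. achievable_rate P f g R}"
  then obtain enc dec where ed: "\<forall>n\<ge>1. zero_error_code f g n (enc n) (dec n)"
    "(\<lambda>n. code_rate P g n (enc n)) \<longlonglongrightarrow> R"
    unfolding achievable_rate_def by blast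
  have h: "\<forall>n\<ge>1. HH \<le> code_rate P g n (enc n)"
  proof (intro allI impI)
    fix n :: nat assume "n \<ge> 1"
    then show "HH \<le> code_rate P g n (enc n)" using converse ed(1) by blast
  qed
  show "HH \<le> R" using LIMSEQ_le_const[OF ed(2), of HH] h by blast
qed

end


theorem theorem3:
  fixes P :: "'x::finite \<Rightarrow> 'y::finite \<Rightarrow> real"
    and f :: "'x \<Rightarrow> 'y \<Rightarrow> 'u::finite"
    and g :: "'y \<Rightarrow> 'z::finite"
    and ys0 :: "'y list"
  assumes full_support: "\<And>x y. P x y > 0"
    and sum_one: "(\<Sum>x\<in>UNIV. \<Sum>y\<in>UNIV. P x y) = 1"
    and enum: "distinct ys0" "set ys0 = UNIV"
  shows "optimal_rate P f g = cond_entropy P (\<lambda>x y. jfun ys0 f g x (g y)) (\<lambda>x y. g y)"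
  proof -
  interpret src P f g ys0
    by (rule src.intro) (use full_support sum_one enum in auto)
  show ?thesis by (rule optimal)
qed

end
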